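(* There is an isometric embedding of the partition space $(\mathcal{P}_{\ell,m},\delta_2)$ into the graph edit kernel space $(\mathcal{G}_{\ell,m},\delta_g)$, i.e. an injective map $f:\mathcal{P}_{\ell,m}\to\mathcal{G}_{\ell,m}$ with $\delta_g(f(X),f(Y))=\delta_2(X,Y)$ for all $X,Y\in\mathcal{P}_{\ell,m}$.
   Context: Fix $1\le\ell\le m$. $\mathcal{X} = \{\mathbf{X}\in[0,1]^{\ell\times m} : \mathbf{X}^T\mathbf{1}_\ell = \mathbf{1}_m\}$; $\Pi$ is the group of $\ell\times\ell$ permutation matrices; $\mathcal{P}_{\ell,m}$ is the set of orbits $\{\mathbf{P}\mathbf{X}:\mathbf{P}\in\Pi\}$ with metric $\delta_2(X,Y)=\min\{\|\mathbf{X}-\mathbf{Y}\|_2:\mathbf{X}\in X,\mathbf{Y}\in Y\}$ (Frobenius norm). An attributed graph of order $\ell$ with attributes in $\mathbb{R}^m$ is a triple $(\mathcal{V},\mathcal{E},\alpha)$ with $|\mathcal{V}|=\ell$, $\mathcal{E}\subseteq\mathcal{V}\times\mathcal{V}$, and $\alpha:\mathcal{V}\times\mathcal{V}\to\mathbb{R}^m$ such that for $i\ne j$, $\alpha(i,j)\ne\mathbf{0}$ iff $(i,j)\in\mathcal{E}$ (node attributes $\alpha(i,i)$ are arbitrary); $\mathcal{G}_{\ell,m}$ is the set of such graphs. With $\mathcal{V}=\{1,\dots,\ell\}$, a graph $G$ is represented by the $\ell\times\ell$ matrix $\mathbf{G}=(\mathbf{g}_{ij})$ with entries $\mathbf{g}_{ij}=\alpha(i,j)\in\mathbb{R}^m$,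 and graphs differing by relabeling of nodes are identified. The graph edit kernel metric is $\delta_g(G,H)=\min_{\mathbf{P}\in\Pi}\|\mathbf{G}-\mathbf{P}\mathbf{H}\mathbf{P}^T\|_2$, where for such block matrices $\|\mathbf{A}\|_2=\big(\sum_{i,j}\|\mathbf{a}_{ij}\|^2\big)^{1/2}$ and $\mathbf{P}\mathbf{H}\mathbf{P}^T$ permutes rows and columns of $\mathbf{H}$ simultaneously. *)

theory Defs
  imports "HOL-Analysis.Analysis"
begin

text \<open>Node set and column index set are finite types 'l (size ell) and 'm (size m).
  An ell x m matrix is a function 'l => 'm => real.\<close>

definition partition_matrix :: "('l::finite \<Rightarrow> 'm::finite \<Rightarrow> real) \<Rightarrow> bool" where
  "partition_matrix X \<longleftrightarrow> (\<forall>i j. 0 \<le> X i j \<and> X i j \<le> 1) \<and> (\<forall>j. (\<Sum>i\<in>UNIV. X i j) = 1)"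

definition row_perm :: "('l \<Rightarrow> 'l) \<Rightarrow> ('l \<Rightarrow> 'm \<Rightarrow> real) \<Rightarrow> ('l \<Rightarrow> 'm \<Rightarrow> real)" where
  "row_perm p X = (\<lambda>i j. X (p i) j)"

definition row_orbit :: "('l::finite \<Rightarrow> 'm::finite \<Rightarrow> real) \<Rightarrow> ('l \<Rightarrow> 'm \<Rightarrow> real) set" where
  "row_orbit X = {row_perm p X | p. p permutes (UNIV :: 'l set)}"

definition partition_space :: "('l::finite \<Rightarrow> 'm::finite \<Rightarrow> real) set set" where
  "partition_space = {row_orbit X | X. partition_matrix X}"

definition frob :: "('l::finite \<Rightarrow> 'm::finite \<Rightarrow> real) \<Rightarrow> real" where
  "frob X = sqrt (\<Sum>i\<in>UNIV. \<Sum>j\<in>UNIV. (X i j)\<^sup>2)"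

definition delta2 :: "('l::finite \<Rightarrow> 'm::finite \<Rightarrow> real) set \<Rightarrow> ('l \<Rightarrow> 'm \<Rightarrow> real) set \<Rightarrow> real" where
  "delta2 A B = Min {frob (\<lambda>i j. X i j - Y i j) | X Y. X \<in> A \<and> Y \<in> B}"

text \<open>Attributed graphs of order ell with attributes in R^m, represented by their
  ell x ell matrix of attributes g_ij = alpha(i,j) (the edge set is determined by the
  nonzero off-diagonal entries); graphs are identified up to relabelling of nodes,
  i.e. simultaneous row/column permutation P G P^T.\<close>
definition sim_perm :: "('l \<Rightarrow> 'l) \<Rightarrow> ('l \<Rightarrow> 'l \<Rightarrow> real^'m) \<Rightarrow> ('l \<Rightarrow> 'l \<Rightarrow> real^'m)" where
  "sim_perm p H = (\<lambda>i j. H (p i) (p j))"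

definition graph_class :: "('l::finite \<Rightarrow> 'l \<Rightarrow> real^'m::finite) \<Rightarrow> ('l \<Rightarrow> 'l \<Rightarrow> real^'m) set" where
  "graph_class G = {sim_perm p G | p. p permutes (UNIV :: 'l set)}"

definition graph_space :: "('l::finite \<Rightarrow> 'l \<Rightarrow> real^'m::finite) set set" where
  "graph_space = {graph_class G | G. True}"

definition gnorm :: "('l::finite \<Rightarrow> 'l \<Rightarrow> real^'m::finite) \<Rightarrow> real" where
  "gnorm G = sqrt (\<Sum>i\<in>UNIV. \<Sum>j\<in>UNIV. (norm (G i j))\<^sup>2)"

definition delta_g_mat :: "('l::finite \<Rightarrow> 'l \<Rightarrow> real^'m::finite) \<Rightarrow> ('l \<Rightarrow> 'l \<Rightarrow> real^'m) \<Rightarrow> real" where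
  "delta_g_mat G H = Min {gnorm (\<lambda>i j. G i j - sim_perm p H i j) | p. p permutes (UNIV :: 'l set)}"

definition delta_g :: "('l::finite \<Rightarrow> 'l \<Rightarrow> real^'m::finite) set \<Rightarrow> ('l \<Rightarrow> 'l \<Rightarrow> real^'m) set \<Rightarrow> real" where
  "delta_g A B = delta_g_mat (SOME G. G \<in> A) (SOME H. H \<in> B)"

end

theory Submission
  imports Defs
begin

definition DD :: "('l::finite \<Rightarrow> 'm::finite \<Rightarrow> real) \<Rightarrow> ('l \<Rightarrow> 'l \<Rightarrow> real^'m)" where
  "DD X = (\<lambda>i j. if i = j then (\<chi> k. X i k) else 0)"

definition dd :: "('l::finite \<Rightarrow> 'm::finite \<Rightarrow> real) \<Rightarrow> ('l \<Rightarrow> 'm \<Rightarrow> real) \<Rightarrow> real" where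
  "dd X Y = Min {frob (\<lambda>i j. X i j - row_perm r Y i j) | r. r permutes (UNIV :: 'l set)}"

lemma row_perm_comp: "row_perm p (row_perm q Y) = row_perm (q \<circ> p) Y"
  by (simp add: row_perm_def)

lemma row_perm_id: "row_perm id Y = Y"
  by (simp add: row_perm_def)

lemma self_in_orbit: "X \<in> row_orbit X"
  unfolding row_orbit_def using permutes_id row_perm_id by (metis (mono_tags, lifting) mem_Collect_eq)

lemma orbit_eq:
  assumes "Z \<in> row_orbit X" shows "row_orbit Z = row_orbit X"
proof -
  obtain p where p: "p permutes UNIV" "Z = row_perm p X" using assms unfolding row_orbit_def by blast
  show ?thesis
  proof
    show "row_orbit Z \<subseteq> row_orbit X"
    proof
      fix W assume "W \<in> row_orbit Z"
      then obtain q where q: "q permutes UNIV" "W = row_perm q Z" unfolding row_orbit_def by blast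
      have "W = row_perm (p \<circ> q) X" using p q by (simp add: row_perm_comp)
      moreover have "(p \<circ> q) permutes UNIV" using p q permutes_compose by blast
      ultimately show "W \<in> row_orbit X" unfolding row_orbit_def by blast
    qed
  next
    show "row_orbit X \<subseteq> row_orbit Z"
    proof
      fix W assume "W \<in> row_orbit X"
      then obtain q where q: "q permutes UNIV" "W = row_perm q X" unfolding row_orbit_def by blast
      have ip: "inv p permutes UNIV" using p permutes_inv by blast
      have "row_perm (inv p \<circ> q) Z = row_perm (p \<circ> (inv p \<circ> q)) X" using p by (simp add: row_perm_comp)
      also have "p \<circ> (inv p \<circ> q) = q" using permutes_inverses(1)[OF p(1)] by (simp add: fun_eq_iff)
      finally have "W = row_perm (inv p \<circ> q) Z" using q by (simp add: comp_def)
      moreover have "(inv p \<circ> q) permutes UNIV" using ip q permutes_compose by blast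
      ultimately show "W \<in> row_orbit Z" unfolding row_orbit_def by blast
    qed
  qed
qed

lemma frob_perm:
  assumes "p permutes (UNIV::'l::finite set)"
  shows "frob (row_perm p (Z::'l \<Rightarrow> 'm::finite \<Rightarrow> real)) = frob Z"
proof -
  have "(\<Sum>i\<in>UNIV. \<Sum>j\<in>UNIV. (Z i j)\<^sup>2) = (\<Sum>i\<in>UNIV. \<Sum>j\<in>UNIV. (Z (p i) j)\<^sup>2)"
    using sum.permute[OF assms, of "\<lambda>i. \<Sum>j\<in>UNIV. (Z i j)\<^sup>2"] by (simp add: comp_def)
  then show ?thesis by (simp add: frob_def row_perm_def)
qed

lemma delta2_dd:
  "delta2 (row_orbit X) (row_orbit Y) = dd (X::'l::finite \<Rightarrow> 'm::finite \<Rightarrow> real) Y"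
proof -
  have "{frob (\<lambda>i j. X' i j - Y' i j) | X' Y'. X' \<in> row_orbit X \<and> Y' \<in> row_orbit Y}
      = {frob (\<lambda>i j. X i j - row_perm r Y i j) | r. r permutes (UNIV :: 'l set)}"
  proof (intro equalityI subsetI)
    fix v assume "v \<in> {frob (\<lambda>i j. X' i j - Y' i j) | X' Y'. X' \<in> row_orbit X \<and> Y' \<in> row_orbit Y}"
    then obtain p q where p: "p permutes UNIV" and q: "q permutes UNIV"
      and v: "v = frob (\<lambda>i j. row_perm p X i j - row_perm q Y i j)"
      unfolding row_orbit_def by blast
    define r where "r = q \<circ> inv p"
    have r: "r permutes UNIV" unfolding r_def using p q permutes_inv permutes_compose by blast
    have "(\<lambda>i j. row_perm p X i j - row_perm q Y i j) = row_perm p (\<lambda>i j. X i j - row_perm r Y i j)"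
      using permutes_inverses(2)[OF p] by (simp add: row_perm_def r_def fun_eq_iff)
    then have "v = frob (\<lambda>i j. X i j - row_perm r Y i j)" using v frob_perm[OF p] by simp
    with r show "v \<in> {frob (\<lambda>i j. X i j - row_perm r Y i j) | r. r permutes (UNIV :: 'l set)}" by blast
  next
    fix v assume "v \<in> {frob (\<lambda>i j. X i j - row_perm r Y i j) | r. r permutes (UNIV :: 'l set)}"
    then obtain r where r: "r permutes UNIV" "v = frob (\<lambda>i j. X i j - row_perm r Y i j)" by blast
    have "row_perm r Y \<in> row_orbit Y" using r unfolding row_orbit_def by blast
    then show "v \<in> {frob (\<lambda>i j. X' i j - Y' i j) | X' Y'. X' \<in> row_orbit X \<and> Y' \<in> row_orbit Y}"
      using r self_in_orbit by blast
  qed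
  then show ?thesis unfolding delta2_def dd_def by simp
qed

lemma sim_DD:
  assumes "p permutes (UNIV::'l::finite set)"
  shows "sim_perm p (DD X) = DD (row_perm p (X::'l \<Rightarrow> 'm::finite \<Rightarrow> real))"
  using permutes_inj[OF assms] by (auto simp: sim_perm_def DD_def row_perm_def fun_eq_iff inj_eq)

lemma DD_inj: "DD X = DD Y \<Longrightarrow> X = Y"
proof -
  assume "DD X = DD Y"
  then have "\<And>i. (\<chi> k. X i k) = (\<chi> k. Y i k)" by (metis DD_def)
  then show "X = Y" by (simp add: fun_eq_iff vec_eq_iff)
qed

lemma gnorm_DD:
  "gnorm (\<lambda>i j. DD X i j - DD Y i j) = frob (\<lambda>i j. (X::'l::finite \<Rightarrow> 'm::finite \<Rightarrow> real) i j - Y i j)"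
proof -
  have n: "(norm ((\<chi> k. X i k) - (\<chi> k. Y i k)))\<^sup>2 = (\<Sum>j\<in>UNIV. (X i j - Y i j)\<^sup>2)" for i
    by (simp add: norm_vec_def L2_set_def sum_nonneg)
  have "(\<Sum>j\<in>UNIV. (norm (DD X i j - DD Y i j))\<^sup>2) = (\<Sum>j\<in>UNIV. (X i j - Y i j)\<^sup>2)" for i
  proof -
    have "(\<Sum>j\<in>UNIV. (norm (DD X i j - DD Y i j))\<^sup>2)
        = (\<Sum>j\<in>UNIV. if j = i then (norm ((\<chi> k. X i k) - (\<chi> k. Y i k)))\<^sup>2 else 0)"
      by (rule sum.cong) (auto simp: DD_def)
    also have "\<dots> = (\<Sum>j\<in>UNIV. (X i j - Y i j)\<^sup>2)" using n by simp
    finally show ?thesis .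
  qed
  then show ?thesis by (simp add: gnorm_def frob_def)
qed

lemma dgm_DD: "delta_g_mat (DD X) (DD Y) = dd (X::'l::finite \<Rightarrow> 'm::finite \<Rightarrow> real) Y"
proof -
  have "{gnorm (\<lambda>i j. DD X i j - sim_perm p (DD Y) i j) | p. p permutes (UNIV :: 'l set)}
     = {frob (\<lambda>i j. X i j - row_perm r Y i j) | r. r permutes (UNIV :: 'l set)}"
  proof -
    have "\<And>p. p permutes (UNIV::'l set) \<Longrightarrow> gnorm (\<lambda>i j. DD X i j - sim_perm p (DD Y) i j) = frob (\<lambda>i j. X i j - row_perm p Y i j)"
      by (simp add: sim_DD gnorm_DD)
    then show ?thesis by (smt (verit) Collect_cong)
  qed
  then show ?thesis unfolding delta_g_mat_def dd_def by simp
qed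

theorem theorem5:
  assumes "CARD('l::finite) \<le> CARD('m::finite)"
  shows "\<exists>f :: ('l \<Rightarrow> 'm \<Rightarrow> real) set \<Rightarrow> ('l \<Rightarrow> 'l \<Rightarrow> real^'m) set.
           f ` partition_space \<subseteq> graph_space \<and>
           inj_on f partition_space \<and>
           (\<forall>X\<in>partition_space. \<forall>Y\<in>partition_space. delta_g (f X) (f Y) = delta2 X Y)"
proof -
  define f :: "('l \<Rightarrow> 'm \<Rightarrow> real) set \<Rightarrow> ('l \<Rightarrow> 'l \<Rightarrow> real^'m) set" where
    "f A = graph_class (DD (SOME X. X \<in> A))" for A
  have rep: "A \<in> partition_space \<Longrightarrow> (SOME X. X \<in> A) \<in> A \<and> A = row_orbit (SOME X. X \<in> A)" for A
  proof -
    assume "A \<in> partition_space"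
    then obtain X where A: "A = row_orbit X" unfolding partition_space_def by blast
    then have "(SOME X. X \<in> A) \<in> A" using self_in_orbit by (metis someI)
    then show ?thesis using A orbit_eq by metis
  qed
  have gsome: "\<exists>p. p permutes (UNIV::'l set) \<and> (SOME G. G \<in> graph_class (DD X)) = DD (row_perm p X)" for X :: "'l \<Rightarrow> 'm \<Rightarrow> real"
  proof -
    have "DD X \<in> graph_class (DD X)" unfolding graph_class_def
      by (metis (mono_tags, lifting) mem_Collect_eq permutes_id row_perm_id sim_DD)
    then have "(SOME G. G \<in> graph_class (DD X)) \<in> graph_class (DD X)" by (metis someI)
    then show ?thesis unfolding graph_class_def using sim_DD by fastforce
  qed
  have dist: "delta_g (f A) (f B) = delta2 A B" if A: "A \<in> partition_space" and B: "B \<in> partition_space" for A B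
  proof -
    obtain p where p: "p permutes (UNIV::'l set)" "(SOME G. G \<in> f A) = DD (row_perm p (SOME X. X \<in> A))"
      using gsome unfolding f_def by blast
    obtain q where q: "q permutes (UNIV::'l set)" "(SOME G. G \<in> f B) = DD (row_perm q (SOME X. X \<in> B))"
      using gsome unfolding f_def by blast
    have "delta_g (f A) (f B) = dd (row_perm p (SOME X. X \<in> A)) (row_perm q (SOME X. X \<in> B))"
      unfolding delta_g_def using p q dgm_DD by simp
    also have "\<dots> = delta2 (row_orbit (row_perm p (SOME X. X \<in> A))) (row_orbit (row_perm q (SOME X. X \<in> B)))"
      by (simp add: delta2_dd)
    also have "row_orbit (row_perm p (SOME X. X \<in> A)) = A"
    proof -
      have "row_perm p (SOME X. X \<in> A) \<in> row_orbit (SOME X. X \<in> A)" using p unfolding row_orbit_def by blast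
      then show ?thesis using orbit_eq rep[OF A] by metis
    qed
    also have "row_orbit (row_perm q (SOME X. X \<in> B)) = B"
    proof -
      have "row_perm q (SOME X. X \<in> B) \<in> row_orbit (SOME X. X \<in> B)" using q unfolding row_orbit_def by blast
      then show ?thesis using orbit_eq rep[OF B] by metis
    qed
    finally show ?thesis .
  qed
  have inj: "inj_on f partition_space"
  proof (rule inj_onI)
    fix A B assume A: "A \<in> partition_space" and B: "B \<in> partition_space" and e: "f A = f B"
    define X where "X = (SOME X. X \<in> A)"
    define Y where "Y = (SOME X. X \<in> B)"
    have "DD X \<in> f A" unfolding f_def X_def[symmetric] graph_class_def
      by (metis (mono_tags, lifting) mem_Collect_eq permutes_id row_perm_id sim_DD)
    then have "DD X \<in> graph_class (DD Y)" using e unfolding f_def Y_def by simp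
    then obtain p where p: "p permutes UNIV" "DD X = DD (row_perm p Y)"
      unfolding graph_class_def using sim_DD by fastforce
    then have "X = row_perm p Y" using DD_inj by blast
    then have "X \<in> row_orbit Y" using p unfolding row_orbit_def by blast
    then have "row_orbit X = row_orbit Y" by (rule orbit_eq)
    then show "A = B" using rep[OF A] rep[OF B] X_def Y_def by metis
  qed
  have img: "f ` partition_space \<subseteq> graph_space"
    unfolding f_def graph_space_def by blast
  show ?thesis using img inj dist by blast
qed

end
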